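(* Let $g_c:[0,\infty)\to[0,\infty)$ be a measurable function with $0<K:=\int_0^\infty g_c(u)\,\mathrm{d}u<\infty$. Let $V_1,V_2,R,D$ be mutually independent random variables with $\mathbb{P}(V_k=-1)=\mathbb{P}(V_k=1)=1/2$ for $k=1,2$, $D$ having PDF $f_D(d)=\frac{2}{\pi\sqrt{1-d^2}}$ for $d\in(0,1)$, and $R$ having PDF $f_R(r)=\frac{2r\,g_c(r^2)}{K}$ for $r>0$. Put $Z_1=RDV_1$ and $Z_2=R\sqrt{1-D^2}\,V_2$. Then the random vector $(Z_1,Z_2)^\top$ has a joint PDF $f_{Z_1,Z_2}$ which is jointly symmetric about $(0,0)$, i.e. $f_{Z_1,Z_2}(x,y)=f_{Z_1,Z_2}(x,-y)=f_{Z_1,Z_2}(-x,y)=f_{Z_1,Z_2}(-x,-y)$ for all real $x,y$. *)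

theory Defs
  imports "HOL-Probability.Probability"
begin

end

theory Submission
  imports Defs
begin

lemma pred_in_gtlt[measurable (raw)]:
  "f \<in> borel_measurable M \<Longrightarrow> g \<in> borel_measurable M \<Longrightarrow> Measurable.pred M (\<lambda>x. (f x::real) \<in> {0<..<g x})"
  by (simp add: greaterThanLessThan_iff) measurable

lemma step1:
  fixes h :: "real \<times> real \<Rightarrow> ennreal" and r v w :: real
  assumes [measurable]: "h \<in> borel_measurable (borel \<Otimes>\<^sub>M borel)" and r: "r > 0" and v: "v = -1 \<or> v = 1"
  shows "(\<integral>\<^sup>+d. ennreal (if 0 < d \<and> d < 1 then 2 / (pi * sqrt (1 - d\<^sup>2)) else 0)
              * h (r * d * v, r * sqrt (1 - d\<^sup>2) * w) \<partial>lborel)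
       = (\<integral>\<^sup>+x. ennreal (2 / (pi * sqrt (r\<^sup>2 - x\<^sup>2)) * indicator {0<..<r} (v * x))
              * h (x, w * sqrt (r\<^sup>2 - x\<^sup>2)) \<partial>lborel)"
proof -
  define F where "F = (\<lambda>x. ennreal (2 / (pi * sqrt (r\<^sup>2 - x\<^sup>2)) * indicator {0<..<r} (v * x))
              * h (x, w * sqrt (r\<^sup>2 - x\<^sup>2)))"
  have Fm[measurable]: "F \<in> borel_measurable borel" unfolding F_def by measurable
  have cv: "r * v \<noteq> 0" using r v by auto
  have av: "\<bar>r * v\<bar> = r" using r v by auto
  have vv: "v * v = 1" using v by auto
  have "(\<integral>\<^sup>+x. F x \<partial>lborel) = ennreal r * (\<integral>\<^sup>+d. F (0 + r * v * d) \<partial>lborel)"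
    using nn_integral_real_affine[OF Fm cv, of 0] av by simp
  also have "\<dots> = (\<integral>\<^sup>+d. ennreal r * F (r * v * d) \<partial>lborel)"
    by (subst nn_integral_cmult) (auto simp: F_def)
  also have "\<dots> = (\<integral>\<^sup>+d. ennreal (if 0 < d \<and> d < 1 then 2 / (pi * sqrt (1 - d\<^sup>2)) else 0)
              * h (r * d * v, r * sqrt (1 - d\<^sup>2) * w) \<partial>lborel)"
  proof (rule nn_integral_cong)
    fix d :: real
    have e1: "v * (r * v * d) = r * d" using vv by (metis mult.assoc mult.left_commute mult.right_neutral)
    have e2: "(r * v * d)\<^sup>2 = r\<^sup>2 * d\<^sup>2" using vv by (simp add: power2_eq_square algebra_simps)
    have e3: "r\<^sup>2 - r\<^sup>2 * d\<^sup>2 = r\<^sup>2 * (1 - d\<^sup>2)" by (simp add: algebra_simps)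
    have e4: "sqrt (r\<^sup>2 * (1 - d\<^sup>2)) = r * sqrt (1 - d\<^sup>2)" using r by (simp add: real_sqrt_mult)
    have e5: "(0 < r * d \<and> r * d < r) \<longleftrightarrow> (0 < d \<and> d < 1)" using r
      by (simp add: zero_less_mult_iff)
    show "ennreal r * F (r * v * d) = ennreal (if 0 < d \<and> d < 1 then 2 / (pi * sqrt (1 - d\<^sup>2)) else 0)
              * h (r * d * v, r * sqrt (1 - d\<^sup>2) * w)"
    proof (cases "0 < d \<and> d < 1")
      case True
      then have "ennreal r * ennreal (2 / (pi * (r * sqrt (1 - d\<^sup>2)))) = ennreal (2 / (pi * sqrt (1 - d\<^sup>2)))"
      proof -
        have "r * (2 / (pi * (r * sqrt (1 - d\<^sup>2)))) = 2 / (pi * sqrt (1 - d\<^sup>2))" using r by simp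
        moreover have "ennreal r * ennreal (2 / (pi * (r * sqrt (1 - d\<^sup>2)))) = ennreal (r * (2 / (pi * (r * sqrt (1 - d\<^sup>2)))))"
          using r True by (intro ennreal_mult[symmetric]) (auto intro!: divide_nonneg_nonneg mult_nonneg_nonneg simp: power_le_one)
        ultimately show ?thesis by simp
      qed
      moreover have "F (r * v * d) = ennreal (2 / (pi * (r * sqrt (1 - d\<^sup>2)))) * h (r * d * v, r * sqrt (1 - d\<^sup>2) * w)"
        unfolding F_def e1 e2 e3 e4 using True e5 by (simp add: indicator_def mult_ac)
      ultimately show ?thesis using True by (simp add: mult.assoc[symmetric])
    next
      case False
      then have "indicator {0<..<r} (v * (r * v * d)) = (0::real)" unfolding e1 using e5 by (simp add: indicator_def)
      then have "F (r * v * d) = 0" unfolding F_def by simp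
      then show ?thesis using False by auto
    qed
  qed
  finally show ?thesis unfolding F_def ..
qed

lemma ennreal_half: "ennreal a * H / 2 = ennreal (a / 2) * (H::ennreal)"
proof (cases "a \<ge> 0")
  case True
  then show ?thesis by (metis ennreal_divide_numeral ennreal_divide_times ennreal_times_divide)
next
  case False
  then show ?thesis by (simp add: ennreal_neg)
qed

lemma step1b:
  fixes h :: "real \<times> real \<Rightarrow> ennreal" and r w :: real
  assumes [measurable]: "h \<in> borel_measurable (borel \<Otimes>\<^sub>M borel)" and r: "r > 0"
  shows "((\<integral>\<^sup>+d. ennreal (if 0 < d \<and> d < 1 then 2 / (pi * sqrt (1 - d\<^sup>2)) else 0)
              * h (r * d * -1, r * sqrt (1 - d\<^sup>2) * w) \<partial>lborel) +
          (\<integral>\<^sup>+d. ennreal (if 0 < d \<and> d < 1 then 2 / (pi * sqrt (1 - d\<^sup>2)) else 0)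
              * h (r * d * 1, r * sqrt (1 - d\<^sup>2) * w) \<partial>lborel)) / 2
       = (\<integral>\<^sup>+x. ennreal (1 / (pi * sqrt (r\<^sup>2 - x\<^sup>2)) * indicator {0<..<r} \<bar>x\<bar>)
              * h (x, w * sqrt (r\<^sup>2 - x\<^sup>2)) \<partial>lborel)"
proof -
  have e1: "(\<integral>\<^sup>+d. ennreal (if 0 < d \<and> d < 1 then 2 / (pi * sqrt (1 - d\<^sup>2)) else 0)
              * h (r * d * -1, r * sqrt (1 - d\<^sup>2) * w) \<partial>lborel) =
         (\<integral>\<^sup>+x. ennreal (2 / (pi * sqrt (r\<^sup>2 - x\<^sup>2)) * indicator {0<..<r} (-1 * x))
              * h (x, w * sqrt (r\<^sup>2 - x\<^sup>2)) \<partial>lborel)"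
    by (rule step1[OF assms(1) r]) simp
  have e2: "(\<integral>\<^sup>+d. ennreal (if 0 < d \<and> d < 1 then 2 / (pi * sqrt (1 - d\<^sup>2)) else 0)
              * h (r * d * 1, r * sqrt (1 - d\<^sup>2) * w) \<partial>lborel) =
         (\<integral>\<^sup>+x. ennreal (2 / (pi * sqrt (r\<^sup>2 - x\<^sup>2)) * indicator {0<..<r} (1 * x))
              * h (x, w * sqrt (r\<^sup>2 - x\<^sup>2)) \<partial>lborel)"
    by (rule step1[OF assms(1) r]) simp
  let ?c = "\<lambda>x. 2 / (pi * sqrt (r\<^sup>2 - x\<^sup>2))"
  let ?H = "\<lambda>x. h (x, w * sqrt (r\<^sup>2 - x\<^sup>2))"
    have m1: "(\<lambda>x. ennreal (?c x * indicator {0<..<r} (-1 * x)) * ?H x) \<in> borel_measurable lborel"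
      by measurable
    have m2: "(\<lambda>x. ennreal (?c x * indicator {0<..<r} (1 * x)) * ?H x) \<in> borel_measurable lborel"
      by measurable
    have s: "(\<integral>\<^sup>+x. ennreal (?c x * indicator {0<..<r} (-1 * x)) * ?H x \<partial>lborel) +
          (\<integral>\<^sup>+x. ennreal (?c x * indicator {0<..<r} (1 * x)) * ?H x \<partial>lborel)
        = (\<integral>\<^sup>+x. ennreal (?c x * indicator {0<..<r} (-1 * x)) * ?H x + ennreal (?c x * indicator {0<..<r} (1 * x)) * ?H x \<partial>lborel)"
      by (rule nn_integral_add[OF m1 m2, symmetric])
    have d: "(\<integral>\<^sup>+x. ennreal (?c x * indicator {0<..<r} (-1 * x)) * ?H x + ennreal (?c x * indicator {0<..<r} (1 * x)) * ?H x \<partial>lborel) / 2 = (\<integral>\<^sup>+x. (ennreal (?c x * indicator {0<..<r} (-1 * x)) * ?H x + ennreal (?c x * indicator {0<..<r} (1 * x)) * ?H x) / 2 \<partial>lborel)"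
      by (rule nn_integral_divide[symmetric]) (rule borel_measurable_add[OF m1 m2])
    have c: "(\<integral>\<^sup>+x. (ennreal (?c x * indicator {0<..<r} (-1 * x)) * ?H x + ennreal (?c x * indicator {0<..<r} (1 * x)) * ?H x) / 2 \<partial>lborel) = (\<integral>\<^sup>+x. ennreal (1 / (pi * sqrt (r\<^sup>2 - x\<^sup>2)) * indicator {0<..<r} \<bar>x\<bar>) * ?H x \<partial>lborel)"
    proof (rule nn_integral_cong)
      fix x :: real
      show "(ennreal (?c x * indicator {0<..<r} (-1 * x)) * ?H x + ennreal (?c x * indicator {0<..<r} (1 * x)) * ?H x) / 2
          = ennreal (1 / (pi * sqrt (r\<^sup>2 - x\<^sup>2)) * indicator {0<..<r} \<bar>x\<bar>) * ?H x"
      proof -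
        have half: "?c x * t / 2 = 1 / (pi * sqrt (r\<^sup>2 - x\<^sup>2)) * t" for t by simp
        consider "x > 0" | "x < 0" | "x = 0" by linarith
        then show ?thesis
        proof cases
          case 1
          have i1: "indicator {0<..<r} (-1 * x) = (0::real)" using 1 by (simp add: indicator_def)
          have i2: "indicator {0<..<r} (1 * x) = (indicator {0<..<r} \<bar>x\<bar> :: real)" using 1 by simp
          show ?thesis unfolding i1 i2 by (simp add: ennreal_half half del: times_divide_eq_right)
        next
          case 2
          have i1: "indicator {0<..<r} (1 * x) = (0::real)" using 2 by (simp add: indicator_def)
          have i2: "indicator {0<..<r} (-1 * x) = (indicator {0<..<r} \<bar>x\<bar> :: real)" using 2 by simp
          show ?thesis unfolding i1 i2 by (simp add: ennreal_half half del: times_divide_eq_right)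
        next
          case 3
          then show ?thesis by (simp add: indicator_def)
        qed
      qed
    qed
    show ?thesis unfolding e1 e2 s d c ..
qed

lemma subst_sqrt:
  fixes a :: real and \<phi> :: "real \<Rightarrow> ennreal"
  assumes a: "a > 0" and [measurable]: "\<phi> \<in> borel_measurable borel"
  shows "(\<integral>\<^sup>+r. \<phi> r * indicator {a..} r \<partial>lborel) =
         (\<integral>\<^sup>+y. \<phi> (sqrt (a\<^sup>2 + y\<^sup>2)) * ennreal (y / sqrt (a\<^sup>2 + y\<^sup>2)) * indicator {0..} y \<partial>lborel)"
proof -
  define g where "g = (\<lambda>y::real. sqrt (a\<^sup>2 + y\<^sup>2))"
  define g' where "g' = (\<lambda>y::real. y / sqrt (a\<^sup>2 + y\<^sup>2))"
  have pos: "a\<^sup>2 + y\<^sup>2 > 0" for y using a by (simp add: add_pos_nonneg)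
  have der: "(g has_real_derivative g' y) (at y)" for y
    unfolding g_def g'_def
    using pos[of y]
    by (auto intro!: derivative_eq_intros simp: field_simps power2_eq_square)
  have cont: "continuous_on S g'" for S
    unfolding g'_def using pos a by (auto intro!: continuous_intros simp: pos less_imp_neq[symmetric])
  have g0: "g 0 = a" using a by (simp add: g_def)
  define b where "b = (\<lambda>n::nat. real n + 1)"
  have eq: "(\<integral>\<^sup>+r. \<phi> r * indicator {a..g (b n)} r \<partial>lborel) =
         (\<integral>\<^sup>+y. \<phi> (g y) * ennreal (g' y) * indicator {0..b n} y \<partial>lborel)" for n
    using nn_integral_substitution_aux[of \<phi> 0 "b n" g g', OF _ _ der cont] g0
    by (auto simp: b_def g'_def intro!: divide_nonneg_pos pos)
  have gmeas[measurable]: "g \<in> borel_measurable borel" "g' \<in> borel_measurable borel"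
    unfolding g_def g'_def by measurable
  have L: "(\<integral>\<^sup>+r. \<phi> r * indicator S r \<partial>lborel) = emeasure (density lborel \<phi>) S" if "S \<in> sets borel" for S
    using that by (simp add: emeasure_density)
  have L2: "(\<integral>\<^sup>+y. \<phi> (g y) * ennreal (g' y) * indicator S y \<partial>lborel) = emeasure (density lborel (\<lambda>y. \<phi> (g y) * ennreal (g' y))) S" if "S \<in> sets borel" for S
    using that by (simp add: emeasure_density)
  have U1: "(\<Union>n. {a..g (b n)}) = {a..}"
  proof (auto simp: g_def b_def)
    fix x assume "a \<le> x"
    obtain n :: nat where "x \<le> real n" using real_arch_simple by blast
    then have "x \<le> sqrt (a\<^sup>2 + (real n + 1)\<^sup>2)"
      by (smt (verit) real_sqrt_ge_abs2 abs_le_D1 )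
    then show "\<exists>n. x \<le> sqrt (a\<^sup>2 + (real n + 1)\<^sup>2)" by blast
  qed
  have U2: "(\<Union>n. {0..b n}) = {0..}"
  proof (auto simp: b_def)
    fix x :: real assume "0 \<le> x"
    obtain n :: nat where "x \<le> real n" using real_arch_simple by blast
    then show "\<exists>n. x \<le> real n + 1" by (intro exI[of _ n]) simp
  qed
  have inc1: "incseq (\<lambda>n. {a..g (b n)})"
    by (auto simp: incseq_def g_def b_def intro!: real_sqrt_le_mono power_mono)
  have inc2: "incseq (\<lambda>n. {0..b n})"
    by (auto simp: incseq_def b_def)
  have "(\<integral>\<^sup>+r. \<phi> r * indicator {a..} r \<partial>lborel) = emeasure (density lborel \<phi>) (\<Union>n. {a..g (b n)})"
    by (subst U1) (simp add: L)
  also have "\<dots> = (SUP n. emeasure (density lborel \<phi>) {a..g (b n)})"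
    by (rule SUP_emeasure_incseq[symmetric]) (auto simp: inc1)
  also have "\<dots> = (SUP n. emeasure (density lborel (\<lambda>y. \<phi> (g y) * ennreal (g' y))) {0..b n})"
    using eq by (simp add: L[symmetric] L2[symmetric])
  also have "\<dots> = emeasure (density lborel (\<lambda>y. \<phi> (g y) * ennreal (g' y))) (\<Union>n. {0..b n})"
    by (rule SUP_emeasure_incseq) (auto simp: inc2)
  also have "\<dots> = (\<integral>\<^sup>+y. \<phi> (g y) * ennreal (g' y) * indicator {0..} y \<partial>lborel)"
    by (subst U2) (simp add: L2)
  finally show ?thesis by (simp add: g_def g'_def)
qed

lemma step2:
  fixes h :: "real \<times> real \<Rightarrow> ennreal" and G :: "real \<Rightarrow> real" and x w K :: real
  assumes [measurable]: "h \<in> borel_measurable (borel \<Otimes>\<^sub>M borel)" and [measurable]: "G \<in> borel_measurable borel"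
    and Gnn: "\<And>u. G u \<ge> 0" and K: "K > 0" and x: "x \<noteq> 0"
  shows "(\<integral>\<^sup>+r. ennreal (if 0 < r then 2 * r * G (r\<^sup>2) / K else 0) *
            (ennreal (1 / (pi * sqrt (r\<^sup>2 - x\<^sup>2)) * indicator {0<..<r} \<bar>x\<bar>) * h (x, w * sqrt (r\<^sup>2 - x\<^sup>2))) \<partial>lborel)
       = (\<integral>\<^sup>+y. ennreal (2 * G (x\<^sup>2 + y\<^sup>2) / (pi * K) * indicator {0<..} y) * h (x, w * y) \<partial>lborel)"
proof -
  define \<phi> where "\<phi> = (\<lambda>r. ennreal ((if 0 < r then 2 * r * G (r\<^sup>2) / K else 0) * (1 / (pi * sqrt (r\<^sup>2 - x\<^sup>2)))) * h (x, w * sqrt (r\<^sup>2 - x\<^sup>2)))"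
  have [measurable]: "\<phi> \<in> borel_measurable borel" unfolding \<phi>_def by measurable
  have ax: "\<bar>x\<bar> > 0" using x by simp
  have "(\<integral>\<^sup>+r. ennreal (if 0 < r then 2 * r * G (r\<^sup>2) / K else 0) *
            (ennreal (1 / (pi * sqrt (r\<^sup>2 - x\<^sup>2)) * indicator {0<..<r} \<bar>x\<bar>) * h (x, w * sqrt (r\<^sup>2 - x\<^sup>2))) \<partial>lborel)
      = (\<integral>\<^sup>+r. \<phi> r * indicator {\<bar>x\<bar>..} r \<partial>lborel)"
  proof (rule nn_integral_cong)
    fix r :: real
    consider "r < \<bar>x\<bar>" | "r = \<bar>x\<bar>" | "r > \<bar>x\<bar>" by linarith
    then show "ennreal (if 0 < r then 2 * r * G (r\<^sup>2) / K else 0) *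
            (ennreal (1 / (pi * sqrt (r\<^sup>2 - x\<^sup>2)) * indicator {0<..<r} \<bar>x\<bar>) * h (x, w * sqrt (r\<^sup>2 - x\<^sup>2)))
       = \<phi> r * indicator {\<bar>x\<bar>..} r"
    proof cases
      case 1
      then show ?thesis by (simp add: indicator_def)
    next
      case 2
      then have "r\<^sup>2 - x\<^sup>2 = 0" by simp
      then show ?thesis by (simp add: \<phi>_def)
    next
      case 3
      then have r0: "r > 0" using ax by linarith
      have nn1: "0 \<le> 2 * r * G (r\<^sup>2) / K" using r0 K Gnn by simp
      have "\<bar>x\<bar>\<^sup>2 < r\<^sup>2" using 3 ax by (intro power_strict_mono) auto
      then have "x\<^sup>2 < r\<^sup>2" by simp
      then have nn2: "0 \<le> 1 / (pi * sqrt (r\<^sup>2 - x\<^sup>2))" by simp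
      have "ennreal (2 * r * G (r\<^sup>2) / K) * ennreal (1 / (pi * sqrt (r\<^sup>2 - x\<^sup>2)))
          = ennreal (2 * r * G (r\<^sup>2) / K * (1 / (pi * sqrt (r\<^sup>2 - x\<^sup>2))))"
        using nn1 nn2 by (rule ennreal_mult[symmetric])
      then show ?thesis using 3 r0 ax by (simp add: \<phi>_def indicator_def mult.assoc[symmetric])
    qed
  qed
  also have "\<dots> = (\<integral>\<^sup>+y. \<phi> (sqrt (\<bar>x\<bar>\<^sup>2 + y\<^sup>2)) * ennreal (y / sqrt (\<bar>x\<bar>\<^sup>2 + y\<^sup>2)) * indicator {0..} y \<partial>lborel)"
    by (rule subst_sqrt[OF ax]) measurable
  also have "\<dots> = (\<integral>\<^sup>+y. ennreal (2 * G (x\<^sup>2 + y\<^sup>2) / (pi * K) * indicator {0<..} y) * h (x, w * y) \<partial>lborel)"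
  proof (rule nn_integral_cong)
    fix y :: real
    show "\<phi> (sqrt (\<bar>x\<bar>\<^sup>2 + y\<^sup>2)) * ennreal (y / sqrt (\<bar>x\<bar>\<^sup>2 + y\<^sup>2)) * indicator {0..} y
        = ennreal (2 * G (x\<^sup>2 + y\<^sup>2) / (pi * K) * indicator {0<..} y) * h (x, w * y)"
    proof (cases "y > 0")
      case False
      then show ?thesis by (cases "y = 0") (auto simp: indicator_def ennreal_neg)
    next
      case True
      define \<rho> where "\<rho> = sqrt (x\<^sup>2 + y\<^sup>2)"
      have xy: "x\<^sup>2 + y\<^sup>2 > 0" using True by (simp add: add_nonneg_pos)
      have rho: "\<rho> > 0" "\<rho>\<^sup>2 = x\<^sup>2 + y\<^sup>2" using xy by (auto simp: \<rho>_def)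
      have sy: "sqrt (\<rho>\<^sup>2 - x\<^sup>2) = y" using rho True by simp
      have phi: "\<phi> \<rho> = ennreal (2 * \<rho> * G (x\<^sup>2 + y\<^sup>2) / K * (1 / (pi * y))) * h (x, w * y)"
        unfolding \<phi>_def using rho sy by simp
      have nn1: "0 \<le> 2 * \<rho> * G (x\<^sup>2 + y\<^sup>2) / K * (1 / (pi * y))" using rho K Gnn True by simp
      have nn2: "0 \<le> y / \<rho>" using rho True by simp
      have ar: "2 * \<rho> * G (x\<^sup>2 + y\<^sup>2) / K * (1 / (pi * y)) * (y / \<rho>) = 2 * G (x\<^sup>2 + y\<^sup>2) / (pi * K)"
        using rho True K by (simp add: field_simps)
      have "\<phi> \<rho> * ennreal (y / \<rho>) = (ennreal (2 * \<rho> * G (x\<^sup>2 + y\<^sup>2) / K * (1 / (pi * y))) * ennreal (y / \<rho>)) * h (x, w * y)"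
        unfolding phi by (metis mult.assoc mult.commute)
      also have "ennreal (2 * \<rho> * G (x\<^sup>2 + y\<^sup>2) / K * (1 / (pi * y))) * ennreal (y / \<rho>) = ennreal (2 * G (x\<^sup>2 + y\<^sup>2) / (pi * K))"
        by (subst ennreal_mult[OF nn1 nn2, symmetric]) (simp only: ar)
      finally have "\<phi> \<rho> * ennreal (y / \<rho>) = ennreal (2 * G (x\<^sup>2 + y\<^sup>2) / (pi * K)) * h (x, w * y)" .
      then show ?thesis using True by (simp add: \<rho>_def indicator_def)
    qed
  qed
  finally show ?thesis .
qed

lemma nn_avg: "f \<in> borel_measurable M \<Longrightarrow> g \<in> borel_measurable M \<Longrightarrow>
   (\<integral>\<^sup>+x. (f x + g x) / 2 \<partial>M) = (integral\<^sup>N M f + integral\<^sup>N M g) / 2"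
  by (simp add: nn_integral_divide nn_integral_add)

lemma Jw:
  fixes h :: "real \<times> real \<Rightarrow> ennreal" and G :: "real \<Rightarrow> real" and w K :: real
  assumes [measurable]: "h \<in> borel_measurable (borel \<Otimes>\<^sub>M borel)" and [measurable]: "G \<in> borel_measurable borel"
    and Gnn: "\<And>u. G u \<ge> 0" and K: "K > 0"
  shows "(\<integral>\<^sup>+r. ennreal (if 0 < r then 2 * r * G (r\<^sup>2) / K else 0) *
            (\<integral>\<^sup>+x. ennreal (1 / (pi * sqrt (r\<^sup>2 - x\<^sup>2)) * indicator {0<..<r} \<bar>x\<bar>) * h (x, w * sqrt (r\<^sup>2 - x\<^sup>2)) \<partial>lborel) \<partial>lborel)
       = (\<integral>\<^sup>+x. \<integral>\<^sup>+y. ennreal (2 * G (x\<^sup>2 + y\<^sup>2) / (pi * K) * indicator {0<..} y) * h (x, w * y) \<partial>lborel \<partial>lborel)"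
proof -
  have "(\<integral>\<^sup>+r. ennreal (if 0 < r then 2 * r * G (r\<^sup>2) / K else 0) *
            (\<integral>\<^sup>+x. ennreal (1 / (pi * sqrt (r\<^sup>2 - x\<^sup>2)) * indicator {0<..<r} \<bar>x\<bar>) * h (x, w * sqrt (r\<^sup>2 - x\<^sup>2)) \<partial>lborel) \<partial>lborel)
      = (\<integral>\<^sup>+r. \<integral>\<^sup>+x. ennreal (if 0 < r then 2 * r * G (r\<^sup>2) / K else 0) *
            (ennreal (1 / (pi * sqrt (r\<^sup>2 - x\<^sup>2)) * indicator {0<..<r} \<bar>x\<bar>) * h (x, w * sqrt (r\<^sup>2 - x\<^sup>2))) \<partial>lborel \<partial>lborel)"
    by (rule nn_integral_cong, rule nn_integral_cmult[symmetric]) measurable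
  also have "\<dots> = (\<integral>\<^sup>+x. \<integral>\<^sup>+r. ennreal (if 0 < r then 2 * r * G (r\<^sup>2) / K else 0) *
            (ennreal (1 / (pi * sqrt (r\<^sup>2 - x\<^sup>2)) * indicator {0<..<r} \<bar>x\<bar>) * h (x, w * sqrt (r\<^sup>2 - x\<^sup>2))) \<partial>lborel \<partial>lborel)"
    by (rule lborel_pair.Fubini') measurable
  also have "\<dots> = (\<integral>\<^sup>+x. \<integral>\<^sup>+y. ennreal (2 * G (x\<^sup>2 + y\<^sup>2) / (pi * K) * indicator {0<..} y) * h (x, w * y) \<partial>lborel \<partial>lborel)"
  proof (rule nn_integral_cong_AE)
    show "AE x in lborel. (\<integral>\<^sup>+r. ennreal (if 0 < r then 2 * r * G (r\<^sup>2) / K else 0) *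
            (ennreal (1 / (pi * sqrt (r\<^sup>2 - x\<^sup>2)) * indicator {0<..<r} \<bar>x\<bar>) * h (x, w * sqrt (r\<^sup>2 - x\<^sup>2))) \<partial>lborel)
        = (\<integral>\<^sup>+y. ennreal (2 * G (x\<^sup>2 + y\<^sup>2) / (pi * K) * indicator {0<..} y) * h (x, w * y) \<partial>lborel)"
      using AE_lborel_singleton[of 0]
      by eventually_elim (rule step2[OF assms])
  qed
  finally show ?thesis .
qed

lemma reflect:
  fixes h :: "real \<times> real \<Rightarrow> ennreal" and G :: "real \<Rightarrow> real" and x K :: real
  assumes [measurable]: "h \<in> borel_measurable (borel \<Otimes>\<^sub>M borel)" and [measurable]: "G \<in> borel_measurable borel"
  shows "(\<integral>\<^sup>+y. ennreal (2 * G (x\<^sup>2 + y\<^sup>2) / (pi * K) * indicator {0<..} y) * h (x, -1 * y) \<partial>lborel)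
       = (\<integral>\<^sup>+y. ennreal (2 * G (x\<^sup>2 + y\<^sup>2) / (pi * K) * indicator {..<0} y) * h (x, y) \<partial>lborel)"
proof -
  have m: "(\<lambda>y. ennreal (2 * G (x\<^sup>2 + y\<^sup>2) / (pi * K) * indicator {..<0} y) * h (x, y)) \<in> borel_measurable borel"
    by measurable
  have n: "(-1::real) \<noteq> 0" by simp
  show ?thesis
    using nn_integral_real_affine[OF m n, of 0] by (simp add: indicator_def)
qed

lemma core:
  fixes h :: "real \<times> real \<Rightarrow> ennreal" and G :: "real \<Rightarrow> real" and K :: real
  assumes [measurable]: "h \<in> borel_measurable (borel \<Otimes>\<^sub>M borel)" and [measurable]: "G \<in> borel_measurable borel"
    and Gnn: "\<And>u. G u \<ge> 0" and K: "K > 0"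
  shows "(\<integral>\<^sup>+r. ennreal (if 0 < r then 2 * r * G (r\<^sup>2) / K else 0) *
     ((((\<integral>\<^sup>+d. ennreal (if 0 < d \<and> d < 1 then 2 / (pi * sqrt (1 - d\<^sup>2)) else 0)
              * h (r * d * -1, r * sqrt (1 - d\<^sup>2) * -1) \<partial>lborel) +
        (\<integral>\<^sup>+d. ennreal (if 0 < d \<and> d < 1 then 2 / (pi * sqrt (1 - d\<^sup>2)) else 0)
              * h (r * d * 1, r * sqrt (1 - d\<^sup>2) * -1) \<partial>lborel)) / 2 +
       ((\<integral>\<^sup>+d. ennreal (if 0 < d \<and> d < 1 then 2 / (pi * sqrt (1 - d\<^sup>2)) else 0)
              * h (r * d * -1, r * sqrt (1 - d\<^sup>2) * 1) \<partial>lborel) +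
        (\<integral>\<^sup>+d. ennreal (if 0 < d \<and> d < 1 then 2 / (pi * sqrt (1 - d\<^sup>2)) else 0)
              * h (r * d * 1, r * sqrt (1 - d\<^sup>2) * 1) \<partial>lborel)) / 2) / 2) \<partial>lborel)
   = (\<integral>\<^sup>+p. ennreal (G ((fst p)\<^sup>2 + (snd p)\<^sup>2) / (pi * K)) * h p \<partial>(lborel \<Otimes>\<^sub>M lborel))" (is "?L = ?R")
proof -
  define fR where "fR = (\<lambda>r::real. ennreal (if 0 < r then 2 * r * G (r\<^sup>2) / K else 0))"
  define C where "C = (\<lambda>w r::real. \<integral>\<^sup>+x. ennreal (1 / (pi * sqrt (r\<^sup>2 - x\<^sup>2)) * indicator {0<..<r} \<bar>x\<bar>) * h (x, w * sqrt (r\<^sup>2 - x\<^sup>2)) \<partial>lborel)"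
  define Q where "Q = (\<lambda>w. \<integral>\<^sup>+x. \<integral>\<^sup>+y. ennreal (2 * G (x\<^sup>2 + y\<^sup>2) / (pi * K) * indicator {0<..} y) * h (x, w * y) \<partial>lborel \<partial>lborel)"
  have [measurable]: "fR \<in> borel_measurable borel" unfolding fR_def by measurable
  have mC[measurable]: "(\<lambda>r. fR r * C w r) \<in> borel_measurable lborel" for w unfolding fR_def C_def by measurable
  have J: "(\<integral>\<^sup>+r. fR r * C w r \<partial>lborel) = Q w" for w
    unfolding fR_def C_def Q_def by (rule Jw[OF assms])
  have "?L = (\<integral>\<^sup>+r. (fR r * C (-1) r + fR r * C 1 r) / 2 \<partial>lborel)"
  proof (rule nn_integral_cong)
    fix r :: real
    show "ennreal (if 0 < r then 2 * r * G (r\<^sup>2) / K else 0) *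
     ((((\<integral>\<^sup>+d. ennreal (if 0 < d \<and> d < 1 then 2 / (pi * sqrt (1 - d\<^sup>2)) else 0)
              * h (r * d * -1, r * sqrt (1 - d\<^sup>2) * -1) \<partial>lborel) +
        (\<integral>\<^sup>+d. ennreal (if 0 < d \<and> d < 1 then 2 / (pi * sqrt (1 - d\<^sup>2)) else 0)
              * h (r * d * 1, r * sqrt (1 - d\<^sup>2) * -1) \<partial>lborel)) / 2 +
       ((\<integral>\<^sup>+d. ennreal (if 0 < d \<and> d < 1 then 2 / (pi * sqrt (1 - d\<^sup>2)) else 0)
              * h (r * d * -1, r * sqrt (1 - d\<^sup>2) * 1) \<partial>lborel) +
        (\<integral>\<^sup>+d. ennreal (if 0 < d \<and> d < 1 then 2 / (pi * sqrt (1 - d\<^sup>2)) else 0)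
              * h (r * d * 1, r * sqrt (1 - d\<^sup>2) * 1) \<partial>lborel)) / 2) / 2)
      = (fR r * C (-1) r + fR r * C 1 r) / 2"
    proof (cases "r > 0")
      case True
      show ?thesis
        unfolding step1b[OF assms(1) True] fR_def C_def
        by (simp add: ennreal_times_divide distrib_left)
    next
      case False
      then show ?thesis by (simp add: fR_def)
    qed
  qed
  also have "\<dots> = (Q (-1) + Q 1) / 2"
    by (simp only: nn_avg[OF mC mC] J)
  also have "Q (-1) = (\<integral>\<^sup>+x. \<integral>\<^sup>+y. ennreal (2 * G (x\<^sup>2 + y\<^sup>2) / (pi * K) * indicator {..<0} y) * h (x, y) \<partial>lborel \<partial>lborel)"
    unfolding Q_def by (rule nn_integral_cong, rule reflect[OF assms(1,2)])
  also have "Q 1 = (\<integral>\<^sup>+x. \<integral>\<^sup>+y. ennreal (2 * G (x\<^sup>2 + y\<^sup>2) / (pi * K) * indicator {0<..} y) * h (x, y) \<partial>lborel \<partial>lborel)"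
    unfolding Q_def by simp
  also have "((\<integral>\<^sup>+x. \<integral>\<^sup>+y. ennreal (2 * G (x\<^sup>2 + y\<^sup>2) / (pi * K) * indicator {..<0} y) * h (x, y) \<partial>lborel \<partial>lborel) +
              (\<integral>\<^sup>+x. \<integral>\<^sup>+y. ennreal (2 * G (x\<^sup>2 + y\<^sup>2) / (pi * K) * indicator {0<..} y) * h (x, y) \<partial>lborel \<partial>lborel)) / 2
     = (\<integral>\<^sup>+x. ((\<integral>\<^sup>+y. ennreal (2 * G (x\<^sup>2 + y\<^sup>2) / (pi * K) * indicator {..<0} y) * h (x, y) \<partial>lborel) +
              (\<integral>\<^sup>+y. ennreal (2 * G (x\<^sup>2 + y\<^sup>2) / (pi * K) * indicator {0<..} y) * h (x, y) \<partial>lborel)) / 2 \<partial>lborel)"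
    by (rule nn_avg[symmetric]) measurable
  also have "\<dots> = (\<integral>\<^sup>+x. \<integral>\<^sup>+y. ennreal (G (x\<^sup>2 + y\<^sup>2) / (pi * K)) * h (x, y) \<partial>lborel \<partial>lborel)"
  proof (rule nn_integral_cong)
    fix x :: real
    have "((\<integral>\<^sup>+y. ennreal (2 * G (x\<^sup>2 + y\<^sup>2) / (pi * K) * indicator {..<0} y) * h (x, y) \<partial>lborel) +
              (\<integral>\<^sup>+y. ennreal (2 * G (x\<^sup>2 + y\<^sup>2) / (pi * K) * indicator {0<..} y) * h (x, y) \<partial>lborel)) / 2
       = (\<integral>\<^sup>+y. (ennreal (2 * G (x\<^sup>2 + y\<^sup>2) / (pi * K) * indicator {..<0} y) * h (x, y) +
              ennreal (2 * G (x\<^sup>2 + y\<^sup>2) / (pi * K) * indicator {0<..} y) * h (x, y)) / 2 \<partial>lborel)"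
      by (rule nn_avg[symmetric]) measurable
    also have "\<dots> = (\<integral>\<^sup>+y. ennreal (G (x\<^sup>2 + y\<^sup>2) / (pi * K)) * h (x, y) \<partial>lborel)"
    proof (rule nn_integral_cong_AE)
      show "AE y in lborel. (ennreal (2 * G (x\<^sup>2 + y\<^sup>2) / (pi * K) * indicator {..<0} y) * h (x, y) +
              ennreal (2 * G (x\<^sup>2 + y\<^sup>2) / (pi * K) * indicator {0<..} y) * h (x, y)) / 2
           = ennreal (G (x\<^sup>2 + y\<^sup>2) / (pi * K)) * h (x, y)"
        using AE_lborel_singleton[of 0]
      proof eventually_elim
        case (elim y)
        then consider "y < 0" | "y > 0" by linarith
        then show ?case
          by cases (simp_all add: indicator_def ennreal_half)
      qed
    qed
    finally show "((\<integral>\<^sup>+y. ennreal (2 * G (x\<^sup>2 + y\<^sup>2) / (pi * K) * indicator {..<0} y) * h (x, y) \<partial>lborel) +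
              (\<integral>\<^sup>+y. ennreal (2 * G (x\<^sup>2 + y\<^sup>2) / (pi * K) * indicator {0<..} y) * h (x, y) \<partial>lborel)) / 2
       = (\<integral>\<^sup>+y. ennreal (G (x\<^sup>2 + y\<^sup>2) / (pi * K)) * h (x, y) \<partial>lborel)" .
  qed
  also have "\<dots> = (\<integral>\<^sup>+p. ennreal (G ((fst p)\<^sup>2 + (snd p)\<^sup>2) / (pi * K)) * h p \<partial>(lborel \<Otimes>\<^sub>M lborel))"
  proof -
    have m: "(\<lambda>p. ennreal (G ((fst p)\<^sup>2 + (snd p)\<^sup>2) / (pi * K)) * h p) \<in> borel_measurable (lborel \<Otimes>\<^sub>M lborel)"
      by measurable
    show ?thesis by (subst lborel.nn_integral_fst[OF m, symmetric]) simp
  qed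
  finally show ?thesis .
qed

lemma sign_avg:
  fixes V :: "'a \<Rightarrow> real" and F :: "real \<Rightarrow> ennreal"
  assumes P: "prob_space M" and [measurable]: "V \<in> borel_measurable M"
    and m: "measure M {\<omega> \<in> space M. V \<omega> = -1} = 1/2"
    and p: "measure M {\<omega> \<in> space M. V \<omega> = 1} = 1/2"
  shows "(\<integral>\<^sup>+\<omega>. F (V \<omega>) \<partial>M) = (F (-1) + F 1) / 2"
proof -
  interpret prob_space M by (rule P)
  have s1[measurable]: "{\<omega> \<in> space M. V \<omega> = -1} \<in> sets M" by measurable
  have s2[measurable]: "{\<omega> \<in> space M. V \<omega> = 1} \<in> sets M" by measurable
  have "prob ({\<omega> \<in> space M. V \<omega> = -1} \<union> {\<omega> \<in> space M. V \<omega> = 1}) = 1/2 + 1/2"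
    using finite_measure_Union[OF s1 s2] m p by fastforce
  then have "prob {\<omega> \<in> space M. V \<omega> = -1 \<or> V \<omega> = 1} = 1"
    by (simp add: Collect_disj_eq[symmetric] Un_def) (smt (verit, ccfv_SIG) Collect_cong)
  then have AE: "AE \<omega> in M. V \<omega> = -1 \<or> V \<omega> = 1"
    by (subst (asm) prob_Collect_eq_1) measurable
  have "(\<integral>\<^sup>+\<omega>. F (V \<omega>) \<partial>M) = (\<integral>\<^sup>+\<omega>. F (-1) * indicator {\<omega> \<in> space M. V \<omega> = -1} \<omega> + F 1 * indicator {\<omega> \<in> space M. V \<omega> = 1} \<omega> \<partial>M)"
    by (rule nn_integral_cong_AE) (use AE AE_space in \<open>eventually_elim, auto simp: indicator_def\<close>)
  also have "\<dots> = F (-1) * emeasure M {\<omega> \<in> space M. V \<omega> = -1} + F 1 * emeasure M {\<omega> \<in> space M. V \<omega> = 1}"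
    by (simp add: nn_integral_add nn_integral_cmult)
  also have "\<dots> = F (-1) * ennreal (1/2) + F 1 * ennreal (1/2)"
    by (simp add: emeasure_eq_measure m p)
  also have "\<dots> = (F (-1) + F 1) / 2"
    by (simp add: ennreal_divide_numeral[symmetric] ennreal_times_divide distrib_right[symmetric] divide_ennreal_def)
  finally show ?thesis .
qed

lemma prob_part:
  fixes M :: "'a measure" and V1 V2 R D :: "'a \<Rightarrow> real" and fR fD :: "real \<Rightarrow> ennreal"
    and h :: "real \<times> real \<Rightarrow> ennreal"
  assumes P: "prob_space M"
    and indep: "prob_space.indep_vars M (\<lambda>_. borel)
                  (\<lambda>i::nat. if i = 0 then V1 else if i = 1 then V2 else if i = 2 then R else D)
                  {0, 1, 2, 3}"
    and V1_rv[measurable]: "V1 \<in> borel_measurable M"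
    and V2_rv[measurable]: "V2 \<in> borel_measurable M"
    and V1_m: "measure M {\<omega> \<in> space M. V1 \<omega> = -1} = 1/2"
    and V1_p: "measure M {\<omega> \<in> space M. V1 \<omega> = 1} = 1/2"
    and V2_m: "measure M {\<omega> \<in> space M. V2 \<omega> = -1} = 1/2"
    and V2_p: "measure M {\<omega> \<in> space M. V2 \<omega> = 1} = 1/2"
    and D_distr: "distributed M lborel D fD"
    and R_distr: "distributed M lborel R fR"
    and hm[measurable]: "h \<in> borel_measurable (borel \<Otimes>\<^sub>M borel)"
  shows "(\<integral>\<^sup>+\<omega>. h (R \<omega> * D \<omega> * V1 \<omega>, R \<omega> * sqrt (1 - (D \<omega>)\<^sup>2) * V2 \<omega>) \<partial>M) =
    (\<integral>\<^sup>+r. fR r *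
     ((((\<integral>\<^sup>+d. fD d * h (r * d * -1, r * sqrt (1 - d\<^sup>2) * -1) \<partial>lborel) +
        (\<integral>\<^sup>+d. fD d * h (r * d * 1, r * sqrt (1 - d\<^sup>2) * -1) \<partial>lborel)) / 2 +
       ((\<integral>\<^sup>+d. fD d * h (r * d * -1, r * sqrt (1 - d\<^sup>2) * 1) \<partial>lborel) +
        (\<integral>\<^sup>+d. fD d * h (r * d * 1, r * sqrt (1 - d\<^sup>2) * 1) \<partial>lborel)) / 2) / 2) \<partial>lborel)"
proof -
  interpret prob_space M by (rule P)
  have Rm[measurable]: "R \<in> borel_measurable M" using distributed_measurable[OF R_distr] by simp
  have Dm[measurable]: "D \<in> borel_measurable M" using distributed_measurable[OF D_distr] by simp
  have fRm[measurable]: "fR \<in> borel_measurable borel" using distributed_borel_measurable[OF R_distr] by simp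
  have fDm[measurable]: "fD \<in> borel_measurable borel" using distributed_borel_measurable[OF D_distr] by simp
  define X where "X = (\<lambda>i::nat. if i = 0 then V1 else if i = 1 then V2 else if i = 2 then R else D)"
  define I where "I = insert (2::nat) (insert 1 (insert 0 {3}))"
  have I_eq: "I = {0, 1, 2, 3}" unfolding I_def by auto
  define \<mu> where "\<mu> = (\<lambda>i. distr M borel (X i))"
  have rv: "random_variable borel (X i)" for i unfolding X_def by auto
  have eq: "distr M (Pi\<^sub>M I (\<lambda>_. borel)) (\<lambda>\<omega>. \<lambda>i\<in>I. X i \<omega>) = Pi\<^sub>M I \<mu>"
    using indep_vars_iff_distr_eq_PiM[where I=I and M'="\<lambda>_. borel" and X=X, OF _ rv] indep
    unfolding I_eq X_def \<mu>_def by simp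
  interpret PS: product_sigma_finite \<mu>
    unfolding product_sigma_finite_def \<mu>_def
    using prob_space_distr[OF rv] by (simp add: prob_space_imp_sigma_finite)
  have sPi: "sets (Pi\<^sub>M J \<mu>) = sets (Pi\<^sub>M J (\<lambda>_. borel))" for J
    by (rule sets_PiM_cong) (simp_all add: \<mu>_def)
  define \<Phi> where "\<Phi> = (\<lambda>x::nat\<Rightarrow>real. h (x 2 * x 3 * x 0, x 2 * sqrt (1 - (x 3)\<^sup>2) * x 1))"
  have \<Phi>m: "\<Phi> \<in> borel_measurable (Pi\<^sub>M I (\<lambda>_. borel))" unfolding \<Phi>_def I_def by measurable
  have mPi: "f \<in> borel_measurable (Pi\<^sub>M J \<mu>)" if "f \<in> borel_measurable (Pi\<^sub>M J (\<lambda>_. borel))" for f :: "(nat \<Rightarrow> real) \<Rightarrow> ennreal" and J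
    using that by (subst measurable_cong_sets[OF sPi refl]) simp
  have m1: "\<Phi> \<in> borel_measurable (Pi\<^sub>M (insert 2 (insert 1 (insert 0 {3}))) \<mu>)"
    by (rule mPi) (unfold \<Phi>_def, measurable)
  have m2: "(\<lambda>x. h (y2 * x 3 * x 0, y2 * sqrt (1 - (x 3)\<^sup>2) * x 1)) \<in> borel_measurable (Pi\<^sub>M (insert 1 (insert 0 {3})) \<mu>)" for y2
    by (rule mPi) measurable
  have m3: "(\<lambda>x. h (y2 * x 3 * x 0, y2 * sqrt (1 - (x 3)\<^sup>2) * y1)) \<in> borel_measurable (Pi\<^sub>M (insert 0 {3}) \<mu>)" for y2 y1
    by (rule mPi) measurable
  define A where "A = (\<lambda>r v1 v2. \<integral>\<^sup>+d. fD d * h (r * d * v1, r * sqrt (1 - d\<^sup>2) * v2) \<partial>lborel)"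
  have mu3: "\<mu> 3 = density lborel fD"
    unfolding \<mu>_def X_def distributed_distr_eq_density[OF D_distr, symmetric]
    by (rule distr_cong) simp_all
  have mu2: "\<mu> 2 = density lborel fR"
    unfolding \<mu>_def X_def distributed_distr_eq_density[OF R_distr, symmetric]
    by (rule distr_cong) simp_all
  have avg0: "(\<integral>\<^sup>+y. F y \<partial>\<mu> 0) = (F (-1) + F 1) / 2" if "F \<in> borel_measurable borel" for F
    unfolding \<mu>_def X_def using that
    by (simp add: nn_integral_distr sign_avg[OF P V1_rv V1_m V1_p])
  have avg1: "(\<integral>\<^sup>+y. F y \<partial>\<mu> 1) = (F (-1) + F 1) / 2" if "F \<in> borel_measurable borel" for F
    unfolding \<mu>_def X_def using that
    by (simp add: nn_integral_distr sign_avg[OF P V2_rv V2_m V2_p])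
  have Ym: "(\<lambda>\<omega>. \<lambda>i\<in>I. X i \<omega>) \<in> measurable M (Pi\<^sub>M I (\<lambda>_. borel))"
    by (rule measurable_restrict) (use rv in simp)
  have "(\<integral>\<^sup>+\<omega>. h (R \<omega> * D \<omega> * V1 \<omega>, R \<omega> * sqrt (1 - (D \<omega>)\<^sup>2) * V2 \<omega>) \<partial>M) = (\<integral>\<^sup>+\<omega>. \<Phi> (\<lambda>i\<in>I. X i \<omega>) \<partial>M)"
    by (simp add: \<Phi>_def I_def X_def)
  also have "\<dots> = (\<integral>\<^sup>+x. \<Phi> x \<partial>distr M (Pi\<^sub>M I (\<lambda>_. borel)) (\<lambda>\<omega>. \<lambda>i\<in>I. X i \<omega>))"
    by (rule nn_integral_distr[OF Ym, symmetric]) (simp add: \<Phi>m)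
  also have "\<dots> = (\<integral>\<^sup>+x. \<Phi> x \<partial>Pi\<^sub>M I \<mu>)"
    by (simp only: eq)
  also have "\<dots> = (\<integral>\<^sup>+y2. \<integral>\<^sup>+x. h (y2 * x 3 * x 0, y2 * sqrt (1 - (x 3)\<^sup>2) * x 1) \<partial>Pi\<^sub>M (insert 1 (insert 0 {3})) \<mu> \<partial>\<mu> 2)"
    unfolding I_def by (subst PS.product_nn_integral_insert_rev[OF _ _ m1]) (simp_all add: \<Phi>_def)
  also have "\<dots> = (\<integral>\<^sup>+y2. \<integral>\<^sup>+y1. \<integral>\<^sup>+x. h (y2 * x 3 * x 0, y2 * sqrt (1 - (x 3)\<^sup>2) * y1) \<partial>Pi\<^sub>M (insert 0 {3}) \<mu> \<partial>\<mu> 1 \<partial>\<mu> 2)"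
    by (intro nn_integral_cong, subst PS.product_nn_integral_insert_rev[OF _ _ m2]) simp_all
  also have "\<dots> = (\<integral>\<^sup>+y2. \<integral>\<^sup>+y1. \<integral>\<^sup>+y0. \<integral>\<^sup>+x. h (y2 * x 3 * y0, y2 * sqrt (1 - (x 3)\<^sup>2) * y1) \<partial>Pi\<^sub>M {3} \<mu> \<partial>\<mu> 0 \<partial>\<mu> 1 \<partial>\<mu> 2)"
    by (intro nn_integral_cong, subst PS.product_nn_integral_insert_rev[OF _ _ m3]) simp_all
  also have "\<dots> = (\<integral>\<^sup>+y2. \<integral>\<^sup>+y1. \<integral>\<^sup>+y0. \<integral>\<^sup>+d. h (y2 * d * y0, y2 * sqrt (1 - d\<^sup>2) * y1) \<partial>\<mu> 3 \<partial>\<mu> 0 \<partial>\<mu> 1 \<partial>\<mu> 2)"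
    by (intro nn_integral_cong PS.product_nn_integral_singleton[where f="\<lambda>d. h (y2 * d * y0, y2 * sqrt (1 - d\<^sup>2) * y1)" for y2 y1 y0])
       (simp add: \<mu>_def)
  also have "\<dots> = (\<integral>\<^sup>+y2. \<integral>\<^sup>+y1. \<integral>\<^sup>+y0. A y2 y0 y1 \<partial>\<mu> 0 \<partial>\<mu> 1 \<partial>\<mu> 2)"
    by (intro nn_integral_cong) (simp add: mu3 A_def nn_integral_density)
  also have "\<dots> = (\<integral>\<^sup>+y2. \<integral>\<^sup>+y1. (A y2 (-1) y1 + A y2 1 y1) / 2 \<partial>\<mu> 1 \<partial>\<mu> 2)"
    by (intro nn_integral_cong avg0) (simp add: A_def)
  also have "\<dots> = (\<integral>\<^sup>+y2. ((A y2 (-1) (-1) + A y2 1 (-1)) / 2 + (A y2 (-1) 1 + A y2 1 1) / 2) / 2 \<partial>\<mu> 2)"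
    by (intro nn_integral_cong avg1) (simp add: A_def)
  also have "\<dots> = (\<integral>\<^sup>+r. fR r * (((A r (-1) (-1) + A r 1 (-1)) / 2 + (A r (-1) 1 + A r 1 1) / 2) / 2) \<partial>lborel)"
    by (simp add: mu2 A_def nn_integral_density)
  finally show ?thesis unfolding A_def .
qed

theorem proposition2:
  fixes M :: "'a measure"
    and g :: "real \<Rightarrow> real" and K :: real
    and V1 V2 R D :: "'a \<Rightarrow> real"
  assumes "prob_space M"
    and g_meas: "set_borel_measurable lborel {0..} g"
    and g_nonneg: "\<And>u. u \<ge> 0 \<Longrightarrow> g u \<ge> 0"
    and g_int: "set_integrable lborel {0..} g"
    and K_def: "K = (LBINT u:{0..}. g u)"
    and K_pos: "0 < K"
    and indep: "prob_space.indep_vars M (\<lambda>_. borel)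
                  (\<lambda>i::nat. if i = 0 then V1 else if i = 1 then V2 else if i = 2 then R else D)
                  {0, 1, 2, 3}"
    and V1_rv: "V1 \<in> borel_measurable M"
    and V2_rv: "V2 \<in> borel_measurable M"
    and V1_m: "measure M {\<omega> \<in> space M. V1 \<omega> = -1} = 1/2"
    and V1_p: "measure M {\<omega> \<in> space M. V1 \<omega> = 1} = 1/2"
    and V2_m: "measure M {\<omega> \<in> space M. V2 \<omega> = -1} = 1/2"
    and V2_p: "measure M {\<omega> \<in> space M. V2 \<omega> = 1} = 1/2"
    and D_distr: "distributed M lborel D
       (\<lambda>d. ennreal (if 0 < d \<and> d < 1 then 2 / (pi * sqrt (1 - d\<^sup>2)) else 0))"
    and R_distr: "distributed M lborel R
       (\<lambda>r. ennreal (if 0 < r then 2 * r * g (r\<^sup>2) / K else 0))"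
  shows "\<exists>f :: real \<times> real \<Rightarrow> ennreal.
           distributed M (lborel \<Otimes>\<^sub>M lborel)
             (\<lambda>\<omega>. (R \<omega> * D \<omega> * V1 \<omega>, R \<omega> * sqrt (1 - (D \<omega>)\<^sup>2) * V2 \<omega>)) f
           \<and> (\<forall>x y. f (x, y) = f (x, - y) \<and> f (x, y) = f (- x, y) \<and> f (x, y) = f (- x, - y))"
proof -
  define G where "G = (\<lambda>u::real. if 0 \<le> u then g u else 0)"
  have "(\<lambda>x. indicator {0..} x *\<^sub>R g x) \<in> borel_measurable lborel"
    using g_meas by (simp add: set_borel_measurable_def)
  moreover have "(\<lambda>x. indicator {0..} x *\<^sub>R g x) = G"
    by (auto simp: G_def indicator_def fun_eq_iff)
  ultimately have Gm[measurable]: "G \<in> borel_measurable borel" by simp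
  have Gnn: "G u \<ge> 0" for u using g_nonneg by (simp add: G_def)
  have fR_eq: "(\<lambda>r. ennreal (if 0 < r then 2 * r * g (r\<^sup>2) / K else 0)) =
      (\<lambda>r. ennreal (if 0 < r then 2 * r * G (r\<^sup>2) / K else 0))"
    by (auto simp: G_def fun_eq_iff)
  have Rm[measurable]: "R \<in> borel_measurable M" using distributed_measurable[OF R_distr] by simp
  have Dm[measurable]: "D \<in> borel_measurable M" using distributed_measurable[OF D_distr] by simp
  note [measurable] = V1_rv V2_rv
  define f where "f = (\<lambda>p::real \<times> real. ennreal (G ((fst p)\<^sup>2 + (snd p)\<^sup>2) / (pi * K)))"
  define Z where "Z = (\<lambda>\<omega>. (R \<omega> * D \<omega> * V1 \<omega>, R \<omega> * sqrt (1 - (D \<omega>)\<^sup>2) * V2 \<omega>))"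
  have fm[measurable]: "f \<in> borel_measurable (lborel \<Otimes>\<^sub>M lborel)" unfolding f_def by measurable
  have Zm[measurable]: "Z \<in> measurable M (lborel \<Otimes>\<^sub>M lborel)" unfolding Z_def by measurable
  have sets_eq: "sets (lborel \<Otimes>\<^sub>M lborel) = sets (borel \<Otimes>\<^sub>M (borel :: real measure))"
    by (rule sets_pair_measure_cong) simp_all
  have "distr M (lborel \<Otimes>\<^sub>M lborel) Z = density (lborel \<Otimes>\<^sub>M lborel) f"
  proof (rule measure_eqI)
    show "sets (distr M (lborel \<Otimes>\<^sub>M lborel) Z) = sets (density (lborel \<Otimes>\<^sub>M lborel) f)" by simp
    fix A assume "A \<in> sets (distr M (lborel \<Otimes>\<^sub>M lborel) Z)"
    then have A: "A \<in> sets (lborel \<Otimes>\<^sub>M lborel)" by simp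
    then have A': "A \<in> sets (borel \<Otimes>\<^sub>M borel)" using sets_eq by simp
    have hm: "indicator A \<in> borel_measurable (borel \<Otimes>\<^sub>M (borel :: real measure))"
      using A' by simp
    have "emeasure (distr M (lborel \<Otimes>\<^sub>M lborel) Z) A = (\<integral>\<^sup>+x. indicator A x \<partial>distr M (lborel \<Otimes>\<^sub>M lborel) Z)"
      using A by simp
    also have "\<dots> = (\<integral>\<^sup>+\<omega>. indicator A (Z \<omega>) \<partial>M)"
      by (rule nn_integral_distr[OF Zm]) (use A in simp)
    also have "\<dots> = (\<integral>\<^sup>+p. ennreal (G ((fst p)\<^sup>2 + (snd p)\<^sup>2) / (pi * K)) * indicator A p \<partial>(lborel \<Otimes>\<^sub>M lborel))"
      unfolding Z_def
      by (subst prob_part[OF \<open>prob_space M\<close> indep V1_rv V2_rv V1_m V1_p V2_m V2_p D_distr R_distr[unfolded fR_eq] hm])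
         (rule core[OF hm Gm Gnn K_pos])
    also have "\<dots> = emeasure (density (lborel \<Otimes>\<^sub>M lborel) f) A"
      using A by (simp add: emeasure_density f_def)
    finally show "emeasure (distr M (lborel \<Otimes>\<^sub>M lborel) Z) A = emeasure (density (lborel \<Otimes>\<^sub>M lborel) f) A" .
  qed
  then have "distributed M (lborel \<Otimes>\<^sub>M lborel) Z f"
    unfolding distributed_def using fm Zm by simp
  moreover have "\<forall>x y. f (x, y) = f (x, - y) \<and> f (x, y) = f (- x, y) \<and> f (x, y) = f (- x, - y)"
    by (simp add: f_def)
  ultimately show ?thesis unfolding Z_def by blast
qed

end
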